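(* Let $n\ge5$ be odd and $M$ an $n\times n$ HW-matrix. There is no spin$^c$ set $S$ for $M$ with $|S|=n-1$.
   Context: $\mathcal S=\{0,1,2,3\}$ is the Klein four-group ($\mathbb Z_2$-vector space) with $x+x=0$, $1+2=3$, $1+3=2$, $2+3=1$. $\mathcal P_n$ is the power set of $\{1,\dots,n\}$ (addition = symmetric difference, product = intersection); $|U|_2=|U|\bmod 2$; $J_M(U)=\{j:\sum_{i\in U}M_{ij}=1\}$. $M$ is an HW-matrix if it has $1$ on the diagonal and $2$ or $3$ off the diagonal, all column sums are $0$, and $J_M(U)\ne\emptyset$ for all $U\ne\emptyset,\{1,\dots,n\}$. $S\in\mathcal P_n$ is a spin$^c$ set for $M$ if $|(J_M(U)+U)\cap S|_2=\binom{|U|}2\bmod 2$ for all $U\in\mathcal P_n$. *)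

theory Defs
  imports Main
begin

text \<open>The Klein four-group S = {0,1,2,3} with x+x=0, 1+2=3, 1+3=2, 2+3=1.
  Encoded as a datatype; K0 is the zero. The sum is bitwise XOR of the labels.\<close>

datatype klein = K0 | K1 | K2 | K3

instantiation klein :: comm_monoid_add
begin

definition zero_klein :: klein where "zero_klein = K0"

fun plus_klein :: "klein \<Rightarrow> klein \<Rightarrow> klein" where
  "plus_klein K0 y = y"
| "plus_klein x K0 = x"
| "plus_klein K1 K1 = K0"
| "plus_klein K2 K2 = K0"
| "plus_klein K3 K3 = K0"
| "plus_klein K1 K2 = K3"
| "plus_klein K2 K1 = K3"
| "plus_klein K1 K3 = K2"
| "plus_klein K3 K1 = K2"
| "plus_klein K2 K3 = K1"
| "plus_klein K3 K2 = K1"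

instance
proof
  fix a b c :: klein
  show "a + b + c = a + (b + c)" by (cases a; cases b; cases c) auto
  show "a + b = b + a" by (cases a; cases b) auto
  show "0 + a = a" by (simp add: zero_klein_def)
qed

end

text \<open>Matrices are n x n with rows/columns indexed by {1..n}; entries of M outside
  that range are irrelevant. Column sums are taken in the Klein four-group.\<close>

definition J :: "nat \<Rightarrow> (nat \<Rightarrow> nat \<Rightarrow> klein) \<Rightarrow> nat set \<Rightarrow> nat set" where
  "J n M U = {j \<in> {1..n}. (\<Sum>i\<in>U. M i j) = K1}"

definition HW_matrix :: "nat \<Rightarrow> (nat \<Rightarrow> nat \<Rightarrow> klein) \<Rightarrow> bool" where
  "HW_matrix n M \<longleftrightarrow>
     (\<forall>i\<in>{1..n}. M i i = K1) \<and>
     (\<forall>i\<in>{1..n}. \<forall>j\<in>{1..n}. i \<noteq> j \<longrightarrow> M i j = K2 \<or> M i j = K3) \<and>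
     (\<forall>j\<in>{1..n}. (\<Sum>i\<in>{1..n}. M i j) = 0) \<and>
     (\<forall>U. U \<subseteq> {1..n} \<and> U \<noteq> {} \<and> U \<noteq> {1..n} \<longrightarrow> J n M U \<noteq> {})"

definition symdiff :: "'a set \<Rightarrow> 'a set \<Rightarrow> 'a set" where
  "symdiff A B = (A - B) \<union> (B - A)"

definition spinc_set :: "nat \<Rightarrow> (nat \<Rightarrow> nat \<Rightarrow> klein) \<Rightarrow> nat set \<Rightarrow> bool" where
  "spinc_set n M S \<longleftrightarrow> S \<subseteq> {1..n} \<and>
     (\<forall>U. U \<subseteq> {1..n} \<longrightarrow>
        card (symdiff (J n M U) U \<inter> S) mod 2 = (card U choose 2) mod 2)"

end

theory Submission imports Defs begin

lemma card_insert_filter: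
  "finite T \<Longrightarrow> a \<notin> T \<Longrightarrow> card {j\<in>insert a T. R j} = card {j\<in>T. R j} + of_bool (R a)"
proof (cases "R a")
  case True
  assume f: "finite T" "a \<notin> T"
  have "{j\<in>insert a T. R j} = insert a {j\<in>T. R j}" using True by auto
  then show ?thesis using f True by simp
next
  case False
  assume f: "finite T" "a \<notin> T"
  have "{j\<in>insert a T. R j} = {j\<in>T. R j}" using False by auto
  then show ?thesis using False by simp
qed

lemma card_neq_parity:
  "finite T \<Longrightarrow> odd (card {j\<in>T. P j \<noteq> Q j}) = (odd (card {j\<in>T. P j}) \<noteq> odd (card {j\<in>T. Q j}))"
proof (induction rule: finite_induct)
  case empty then show ?case by simp
next
  case (insert a T)
  have e1: "card {j\<in>insert a T. P j \<noteq> Q j} = card {j\<in>T. P j \<noteq> Q j} + of_bool (P a \<noteq> Q a)"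
    by (rule card_insert_filter) (use insert in auto)
  have e2: "card {j\<in>insert a T. P j} = card {j\<in>T. P j} + of_bool (P a)"
    by (rule card_insert_filter) (use insert in auto)
  have e3: "card {j\<in>insert a T. Q j} = card {j\<in>T. Q j} + of_bool (Q a)"
    by (rule card_insert_filter) (use insert in auto)
  show ?case unfolding e1 e2 e3 using insert.IH by (cases "P a"; cases "Q a") auto
qed

lemma tournament_cyc:
  fixes w :: "nat \<Rightarrow> nat \<Rightarrow> bool" and S :: "nat set"
  assumes fin: "finite S" and c2: "card S \<ge> 2"
    and tour: "\<And>i l. i\<in>S \<Longrightarrow> l\<in>S \<Longrightarrow> i\<noteq>l \<Longrightarrow> w i l \<noteq> w l i"
    and par: "\<And>i l. i\<in>S \<Longrightarrow> l\<in>S \<Longrightarrow> odd (card {m\<in>S-{i}. w i m}) = odd (card {m\<in>S-{l}. w l m})"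
  shows "\<exists>a\<in>S. \<exists>b\<in>S. \<exists>c\<in>S. a\<noteq>b \<and> b\<noteq>c \<and> c\<noteq>a \<and> w a b \<and> w b c \<and> w c a"
proof (rule ccontr)
  assume nc: "\<not> ?thesis"
  define out where "out i = card {m\<in>S-{i}. w i m}" for i
  have lt: "out l < out i" if "i\<in>S" "l\<in>S" "i\<noteq>l" "w i l" for i l
  proof -
    have sub: "insert l {m\<in>S-{l}. w l m} \<subseteq> {m\<in>S-{i}. w i m}"
    proof
      fix m assume "m \<in> insert l {m\<in>S-{l}. w l m}"
      then consider "m = l" | "m\<in>S" "m\<noteq>l" "w l m" by auto
      then show "m \<in> {m\<in>S-{i}. w i m}"
      proof cases
        case 1 then show ?thesis using that by auto
      next
        case 2
        have "m \<noteq> i" using 2 that tour by blast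
        moreover have "w i m"
        proof (rule ccontr)
          assume "\<not> w i m"
          then have "w m i" using tour[of i m] 2 that \<open>m\<noteq>i\<close> by auto
          then show False using nc 2 that \<open>m\<noteq>i\<close> by blast
        qed
        ultimately show ?thesis using 2 by auto
      qed
    qed
    have "out l + 1 = card (insert l {m\<in>S-{l}. w l m})"
      unfolding out_def using fin by simp
    also have "\<dots> \<le> out i" unfolding out_def using sub fin by (intro card_mono) auto
    finally show ?thesis by simp
  qed
  have inj: "inj_on out S"
  proof (rule inj_onI)
    fix i l assume "i\<in>S" "l\<in>S" "out i = out l"
    then show "i = l" using lt tour by (metis less_irrefl)
  qed
  have img: "out ` S \<subseteq> {0..<card S}"
  proof
    fix v assume "v \<in> out ` S"
    then obtain i where i: "i\<in>S" "v = out i" by auto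
    have "out i \<le> card (S - {i})" unfolding out_def using fin by (intro card_mono) auto
    also have "\<dots> < card S" using i fin c2 by (simp add: card_Diff_singleton)
    finally show "v \<in> {0..<card S}" using i by simp
  qed
  have "card (out ` S) = card S" using inj by (simp add: card_image)
  then have eq: "out ` S = {0..<card S}" using img by (intro card_subset_eq) auto
  have "0 \<in> out ` S" "1 \<in> out ` S" using eq c2 by auto
  then obtain i l where "i\<in>S" "l\<in>S" "out i = 0" "out l = 1" by (metis imageE)
  then show False using par[of i l] unfolding out_def by simp
qed

lemma kl_pair: "a \<in> {K2,K3} \<Longrightarrow> b \<in> {K2,K3} \<Longrightarrow> (a + b = K1) = (a \<noteq> b)"
  by (cases a; cases b) auto

lemma kl_diag: "b \<in> {K2,K3} \<Longrightarrow> K1 + b \<noteq> K1" "b \<in> {K2,K3} \<Longrightarrow> b + K1 \<noteq> K1"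
  by (cases b; auto)+

lemma kl_tri:
  "b \<in> {K2,K3} \<Longrightarrow> c \<in> {K2,K3} \<Longrightarrow> b \<noteq> c \<Longrightarrow> K1 + (b + c) \<noteq> K1"
  "a \<in> {K2,K3} \<Longrightarrow> c \<in> {K2,K3} \<Longrightarrow> a \<noteq> c \<Longrightarrow> a + (K1 + c) \<noteq> K1"
  "a \<in> {K2,K3} \<Longrightarrow> b \<in> {K2,K3} \<Longrightarrow> a \<noteq> b \<Longrightarrow> a + (b + K1) \<noteq> K1"
  "a \<in> {K2,K3} \<Longrightarrow> b \<in> {K2,K3} \<Longrightarrow> c \<in> {K2,K3} \<Longrightarrow> a + (b + c) \<noteq> K1"
  by (cases a; cases b; cases c; auto)+

theorem mainTheorem16:
  fixes n :: nat and M :: "nat \<Rightarrow> nat \<Rightarrow> klein"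
  assumes "odd n" and "n \<ge> 5" and "HW_matrix n M"
  shows "\<not> (\<exists>S. spinc_set n M S \<and> card S = n - 1)"
proof
  assume "\<exists>S. spinc_set n M S \<and> card S = n - 1"
  then obtain S where sp: "spinc_set n M S" and cS: "card S = n - 1" by blast
  have Ssub: "S \<subseteq> {1..n}" using sp unfolding spinc_set_def by auto
  have spc: "\<And>U. U \<subseteq> {1..n} \<Longrightarrow> card (symdiff (J n M U) U \<inter> S) mod 2 = (card U choose 2) mod 2"
    using sp unfolding spinc_set_def by auto
  have fin: "finite S" using Ssub finite_subset by blast
  have diag: "\<And>i. i \<in> {1..n} \<Longrightarrow> M i i = K1" using assms(3) unfolding HW_matrix_def by auto
  have off: "\<And>i j. i \<in> {1..n} \<Longrightarrow> j \<in> {1..n} \<Longrightarrow> i \<noteq> j \<Longrightarrow> M i j \<in> {K2,K3}"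
    using assms(3) unfolding HW_matrix_def by auto
  have Jne: "\<And>U. U \<subseteq> {1..n} \<Longrightarrow> U \<noteq> {} \<Longrightarrow> U \<noteq> {1..n} \<Longrightarrow> J n M U \<noteq> {}"
    using assms(3) unfolding HW_matrix_def by auto
  define x where "x i j = (M i j = K3)" for i j
  define y where "y i = odd (card {j\<in>S-{i}. x i j})" for i
  define w where "w i l = (x i l \<noteq> y l)" for i l
  have xM: "(x i j \<noteq> x l j) = (M i j \<noteq> M l j)" if "M i j \<in> {K2,K3}" "M l j \<in> {K2,K3}" for i j l
    using that unfolding x_def by auto
  have pair: "odd (card {j\<in>S-{i,l}. x i j \<noteq> x l j})" if il: "i\<in>S" "l\<in>S" "i\<noteq>l" for i l
  proof -
    have U: "{i,l} \<subseteq> {1..n}" using il Ssub by auto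
    have iin: "i \<in> {1..n}" and lin: "l \<in> {1..n}" using U by auto
    have J2: "J n M {i,l} = {j\<in>{1..n}. M i j + M l j = K1}" unfolding J_def using il by simp
    have eq: "symdiff (J n M {i,l}) {i,l} \<inter> S = insert i (insert l {j\<in>S-{i,l}. x i j \<noteq> x l j})"
    proof (rule set_eqI)
      fix j
      show "j \<in> symdiff (J n M {i,l}) {i,l} \<inter> S \<longleftrightarrow> j \<in> insert i (insert l {j\<in>S-{i,l}. x i j \<noteq> x l j})"
      proof (cases "j = i \<or> j = l")
        case True
        have "M i j + M l j \<noteq> K1"
        proof (cases "j = i")
          case True
          then have "M i j = K1" "M l j \<in> {K2,K3}" using diag[OF iin] off[OF lin iin] il by auto
          then show ?thesis using kl_diag(1) by simp
        next
          case False
          then have "j = l" using \<open>j = i \<or> j = l\<close> by simp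
          then have "M l j = K1" "M i j \<in> {K2,K3}" using diag[OF lin] off[OF iin lin] il by auto
          then show ?thesis using kl_diag(2) by simp
        qed
        then have "j \<notin> J n M {i,l}" unfolding J2 by simp
        then show ?thesis using True il unfolding symdiff_def by auto
      next
        case False
        have "j \<in> symdiff (J n M {i,l}) {i,l} \<inter> S \<longleftrightarrow> j \<in> S \<and> M i j + M l j = K1"
          unfolding symdiff_def J2 using False Ssub by auto
        also have "\<dots> \<longleftrightarrow> j \<in> S \<and> x i j \<noteq> x l j"
        proof (cases "j \<in> S")
          case True
          have jin: "j \<in> {1..n}" using True Ssub by auto
          have "M i j \<in> {K2,K3}" "M l j \<in> {K2,K3}" using False off[OF iin jin] off[OF lin jin] by auto
          then show ?thesis using kl_pair xM by auto
        qed simp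
        finally show ?thesis using False by auto
      qed
    qed
    have "card (symdiff (J n M {i,l}) {i,l} \<inter> S) mod 2 = 1"
    proof -
      have "card {i,l} = 2" using il by simp
      moreover have "(2::nat) choose 2 = 1" by simp
      ultimately show ?thesis using spc[OF U] by simp
    qed
    moreover have "card (insert i (insert l {j\<in>S-{i,l}. x i j \<noteq> x l j})) = card {j\<in>S-{i,l}. x i j \<noteq> x l j} + 2"
      using fin il by simp
    ultimately show ?thesis unfolding eq by presburger
  qed
  have tour: "w i l \<noteq> w l i" if il: "i\<in>S" "l\<in>S" "i\<noteq>l" for i l
  proof -
    have p: "odd (card {j\<in>S-{i,l}. x i j}) \<noteq> odd (card {j\<in>S-{i,l}. x l j})"
      using pair[OF il] card_neq_parity[of "S-{i,l}" "x i" "x l"] fin by simp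
    have e1: "S-{i} = insert l (S-{i,l})" using il by auto
    have e2: "S-{l} = insert i (S-{i,l})" using il by auto
    have "card {j\<in>S-{i}. x i j} = card {j\<in>S-{i,l}. x i j} + of_bool (x i l)"
      unfolding e1 using fin by (intro card_insert_filter) auto
    moreover have "card {j\<in>S-{l}. x l j} = card {j\<in>S-{i,l}. x l j} + of_bool (x l i)"
      unfolding e2 using fin by (intro card_insert_filter) auto
    ultimately show ?thesis using p unfolding w_def y_def by auto
  qed
  have par: "odd (card {m\<in>S-{i}. w i m}) = odd (card {m\<in>S. y m})" if i: "i\<in>S" for i
  proof -
    have "odd (card {m\<in>S-{i}. w i m}) = (y i \<noteq> odd (card {m\<in>S-{i}. y m}))"
      unfolding w_def using card_neq_parity[of "S-{i}" "x i" y] fin unfolding y_def by simp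
    moreover have "card {m\<in>S. y m} = card {m\<in>S-{i}. y m} + of_bool (y i)"
    proof -
      have "S = insert i (S-{i})" using i by auto
      then have "card {m\<in>S. y m} = card {m\<in>insert i (S-{i}). y m}" by simp
      also have "\<dots> = card {m\<in>S-{i}. y m} + of_bool (y i)" using fin by (intro card_insert_filter) auto
      finally show ?thesis .
    qed
    ultimately show ?thesis by auto
  qed
  have c2: "card S \<ge> 2" using cS assms(2) by simp
  obtain a b c where abc: "a\<in>S" "b\<in>S" "c\<in>S" "a\<noteq>b" "b\<noteq>c" "c\<noteq>a" "w a b" "w b c" "w c a"
  proof -
    have par2: "odd (card {m\<in>S-{i}. w i m}) = odd (card {m\<in>S-{l}. w l m})" if "i\<in>S" "l\<in>S" for i l
      using par that by simp
    show ?thesis using tournament_cyc[OF fin c2 tour par2] that by blast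
  qed
  have nab: "\<not> w b a" "\<not> w c b" "\<not> w a c" using tour abc by blast+
  have inn: "a \<in> {1..n}" "b \<in> {1..n}" "c \<in> {1..n}" using abc Ssub by auto
  have "M b a \<noteq> M c a" "M a b \<noteq> M c b" "M a c \<noteq> M b c"
    using abc nab unfolding w_def x_def by auto
  have J3: "J n M {a,b,c} = {}"
  proof -
    have "M a j + (M b j + M c j) \<noteq> K1" if j: "j \<in> {1..n}" for j
    proof -
      consider "j = a" | "j = b" | "j = c" | "j \<noteq> a" "j \<noteq> b" "j \<noteq> c" by blast
      then show ?thesis
      proof cases
        case 1
        then have "M a j = K1" "M b j \<in> {K2,K3}" "M c j \<in> {K2,K3}" "M b j \<noteq> M c j"
          using diag off inn abc \<open>M b a \<noteq> M c a\<close> by auto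
        then show ?thesis using kl_tri(1) by simp
      next
        case 2
        then have "M b j = K1" "M a j \<in> {K2,K3}" "M c j \<in> {K2,K3}" "M a j \<noteq> M c j"
          using diag off inn abc \<open>M a b \<noteq> M c b\<close> by auto
        then show ?thesis using kl_tri(2) by simp
      next
        case 3
        then have "M c j = K1" "M a j \<in> {K2,K3}" "M b j \<in> {K2,K3}" "M a j \<noteq> M b j"
          using diag off inn abc \<open>M a c \<noteq> M b c\<close> by auto
        then show ?thesis using kl_tri(3) by simp
      next
        case 4
        then have "M a j \<in> {K2,K3}" "M b j \<in> {K2,K3}" "M c j \<in> {K2,K3}"
          using off inn j by auto
        then show ?thesis using kl_tri(4) by simp
      qed
    qed
    then show ?thesis unfolding J_def using abc by auto
  qed
  have "{a,b,c} \<noteq> {1..n}"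
  proof
    assume "{a,b,c} = {1..n}"
    then have "card {a,b,c} = n" by simp
    moreover have "card {a,b,c} \<le> 3" by (simp add: card_insert_le_m1)
    ultimately show False using assms(2) by simp
  qed
  then show False using Jne[of "{a,b,c}"] J3 inn by auto
qed

end
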